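(* $\mathcal M_{\max}$ is a well-defined functor from $\mathbf{Ord}$ to $\mathbf{Ord}$: for every monotone $f:X\to Y$, $\mathcal M_{\max}(f)$ is a monotone map $(\mathcal M(X),\le_{\mathcal M(X)})\to(\mathcal M(Y),\le_{\mathcal M(Y)})$, $\mathcal M_{\max}(\mathrm{id}_X)=\mathrm{id}$, and $\mathcal M_{\max}(g\circ f)=\mathcal M_{\max}(g)\circ\mathcal M_{\max}(f)$ for monotone $f:X\to Y$, $g:Y\to Z$.
   Context: $\mathbf{Ord}$ is the category of partially ordered sets and monotone maps. For a poset $(X,\le_X)$, $\mathcal M(X)$ is the set of nonempty finite subsets of $X$ whose elements are pairwise incomparable, ordered by $S\le_{\mathcal M(X)}T$ iff every $x\in S$ has some $y\in T$ with $x\le_X y$. For $S\subseteq X$, $S^{\circ}$ denotes the set of maximal elements of $S$. The maximal functor is given by $\mathcal M_{\max}(X)=(\mathcal M(X),\le_{\mathcal M(X)})$ and $\mathcal M_{\max}(f)(S)=(f(S))^{\circ}$ for monotone $f:X\to Y$. *)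

theory Defs
  imports Main
begin

definition poset :: "'a set \<Rightarrow> ('a \<Rightarrow> 'a \<Rightarrow> bool) \<Rightarrow> bool" where
  "poset X le \<longleftrightarrow>
     (\<forall>x\<in>X. le x x) \<and>
     (\<forall>x\<in>X. \<forall>y\<in>X. le x y \<and> le y x \<longrightarrow> x = y) \<and>
     (\<forall>x\<in>X. \<forall>y\<in>X. \<forall>z\<in>X. le x y \<and> le y z \<longrightarrow> le x z)"

definition mono_map :: "'a set \<Rightarrow> ('a \<Rightarrow> 'a \<Rightarrow> bool) \<Rightarrow> 'b set \<Rightarrow> ('b \<Rightarrow> 'b \<Rightarrow> bool)
    \<Rightarrow> ('a \<Rightarrow> 'b) \<Rightarrow> bool" where
  "mono_map X leX Y leY f \<longleftrightarrow>
     f ` X \<subseteq> Y \<and> (\<forall>x\<in>X. \<forall>y\<in>X. leX x y \<longrightarrow> leY (f x) (f y))"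

definition Mset :: "'a set \<Rightarrow> ('a \<Rightarrow> 'a \<Rightarrow> bool) \<Rightarrow> 'a set set" where
  "Mset X le = {S. S \<subseteq> X \<and> S \<noteq> {} \<and> finite S \<and>
                   (\<forall>x\<in>S. \<forall>y\<in>S. x \<noteq> y \<longrightarrow> \<not> le x y \<and> \<not> le y x)}"

definition Mle :: "('a \<Rightarrow> 'a \<Rightarrow> bool) \<Rightarrow> 'a set \<Rightarrow> 'a set \<Rightarrow> bool" where
  "Mle le S T \<longleftrightarrow> (\<forall>x\<in>S. \<exists>y\<in>T. le x y)"

definition maxel :: "('a \<Rightarrow> 'a \<Rightarrow> bool) \<Rightarrow> 'a set \<Rightarrow> 'a set" where
  "maxel le S = {x\<in>S. \<forall>y\<in>S. le x y \<longrightarrow> y = x}"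

definition Mmax_map :: "('b \<Rightarrow> 'b \<Rightarrow> bool) \<Rightarrow> ('a \<Rightarrow> 'b) \<Rightarrow> 'a set \<Rightarrow> 'b set" where
  "Mmax_map leY f S = maxel leY (f ` S)"

end

theory Submission
  imports Defs
begin

lemma exists_max:
  assumes P: "poset A le" and B: "finite B" "B \<subseteq> A" and x: "x \<in> B"
  shows "\<exists>m\<in>maxel le B. le x m"
proof -
  define U where "U y = {z\<in>B. le y z}" for y
  have "\<exists>m. (m \<in> B \<and> le x m) \<and> (\<forall>y. (y \<in> B \<and> le x y) \<longrightarrow> card (U m) \<le> card (U y))"
    by (rule ex_has_least_nat[where k=x]) (use x P B in \<open>auto simp: poset_def\<close>)
  then obtain m where m: "m \<in> B" "le x m" and mn: "\<And>y. y \<in> B \<Longrightarrow> le x y \<Longrightarrow> card (U m) \<le> card (U y)"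
    by blast
  have "m \<in> maxel le B"
    unfolding maxel_def
  proof (safe intro!: m(1))
    fix y assume y: "y \<in> B" "le m y"
    show "y = m"
    proof (rule ccontr)
      assume ne: "y \<noteq> m"
      have xA: "x \<in> A" "m \<in> A" "y \<in> A" using x m y B by auto
      have sub: "U y \<subseteq> U m" using P B y xA unfolding U_def poset_def by blast
      have "m \<notin> U y" using P y ne xA unfolding U_def poset_def by blast
      moreover have "m \<in> U m" using P m xA unfolding U_def poset_def by blast
      ultimately have "U y \<subset> U m" using sub by blast
      hence "card (U y) < card (U m)" using B unfolding U_def by (intro psubset_card_mono) auto
      moreover have "le x y" using P xA m y unfolding poset_def by blast
      ultimately show False using mn[OF y(1)] by simp
    qed
  qed
  thus ?thesis using m by blast
qed

lemma maxel_sub: "maxel le B \<subseteq> B" unfolding maxel_def by auto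

lemma posetD:
  assumes "poset A le"
  shows "\<And>x. x \<in> A \<Longrightarrow> le x x"
    and "\<And>x y. x \<in> A \<Longrightarrow> y \<in> A \<Longrightarrow> le x y \<Longrightarrow> le y x \<Longrightarrow> x = y"
    and "\<And>x y z. x \<in> A \<Longrightarrow> y \<in> A \<Longrightarrow> z \<in> A \<Longrightarrow> le x y \<Longrightarrow> le y z \<Longrightarrow> le x z"
  using assms unfolding poset_def by blast+

lemma mono_part:
  assumes PY: "poset Y leY"
    and fY1: "\<And>x. x \<in> X \<Longrightarrow> f x \<in> Y"
    and fY2: "\<And>x y. x \<in> X \<Longrightarrow> y \<in> X \<Longrightarrow> leX x y \<Longrightarrow> leY (f x) (f y)"
    and S: "S \<in> Mset X leX" and T: "T \<in> Mset X leX" and st: "Mle leX S T"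
  shows "Mle leY (Mmax_map leY f S) (Mmax_map leY f T)"
  unfolding Mle_def Mmax_map_def
proof
  fix y assume "y \<in> maxel leY (f ` S)"
  then obtain x where x: "x \<in> S" "y = f x" unfolding maxel_def by blast
  then obtain x' where x': "x' \<in> T" "leX x x'" using st unfolding Mle_def by blast
  have TX: "finite T" "T \<subseteq> X" using T unfolding Mset_def by auto
  have fin: "finite (f ` T)" "f ` T \<subseteq> Y" using TX fY1 by auto
  have "f x' \<in> f ` T" using x'(1) by blast
  from exists_max[OF PY fin this] obtain m where m: "m \<in> maxel leY (f ` T)" "leY (f x') m"
    by blast
  have "S \<subseteq> X" using S unfolding Mset_def by auto
  hence xX: "x \<in> X" "x' \<in> X" using x(1) x'(1) TX(2) by auto
  have h: "leY (f x) (f x')" using fY2[OF xX x'(2)] .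
  have h2: "f x \<in> Y" "f x' \<in> Y" using fY1 xX by auto
  have "m \<in> f ` T" using m(1) unfolding maxel_def by simp
  hence "m \<in> Y" using fin(2) by blast
  hence "leY (f x) m" by (rule posetD(3)[OF PY h2(1) h2(2) _ h m(2)])
  hence "leY y m" using x(2) by simp
  thus "\<exists>z\<in>maxel leY (f ` T). leY y z" using m(1) by blast
qed

theorem propositionD10:
  fixes X :: "'a set" and leX :: "'a \<Rightarrow> 'a \<Rightarrow> bool"
    and Y :: "'b set" and leY :: "'b \<Rightarrow> 'b \<Rightarrow> bool"
    and Z :: "'c set" and leZ :: "'c \<Rightarrow> 'c \<Rightarrow> bool"
    and f :: "'a \<Rightarrow> 'b" and g :: "'b \<Rightarrow> 'c"
  assumes "poset X leX" and "poset Y leY" and "poset Z leZ"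
    and "mono_map X leX Y leY f" and "mono_map Y leY Z leZ g"
  shows "poset (Mset X leX) (Mle leX)
    \<and> mono_map (Mset X leX) (Mle leX) (Mset Y leY) (Mle leY) (Mmax_map leY f)
    \<and> (\<forall>S\<in>Mset X leX. Mmax_map leX id S = S)
    \<and> (\<forall>S\<in>Mset X leX. Mmax_map leZ (g \<circ> f) S = Mmax_map leZ g (Mmax_map leY f S))"
proof (intro conjI)
  note PX = assms(1) and PY = assms(2) and PZ = assms(3)
  have fY: "\<And>x. x \<in> X \<Longrightarrow> f x \<in> Y" "\<And>x y. x \<in> X \<Longrightarrow> y \<in> X \<Longrightarrow> leX x y \<Longrightarrow> leY (f x) (f y)"
    using assms(4) unfolding mono_map_def by auto
  have gZ: "\<And>x. x \<in> Y \<Longrightarrow> g x \<in> Z" "\<And>x y. x \<in> Y \<Longrightarrow> y \<in> Y \<Longrightarrow> leY x y \<Longrightarrow> leZ (g x) (g y)"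
    using assms(5) unfolding mono_map_def by auto
  show "poset (Mset X leX) (Mle leX)"
    unfolding poset_def
  proof (intro conjI ballI impI)
    fix S assume "S \<in> Mset X leX" thus "Mle leX S S" using posetD(1)[OF PX] unfolding Mset_def Mle_def by blast
  next
    fix S T U assume S: "S \<in> Mset X leX" and T: "T \<in> Mset X leX" and U: "U \<in> Mset X leX"
      and st: "Mle leX S T \<and> Mle leX T U"
    show "Mle leX S U" unfolding Mle_def
    proof
      fix x assume "x \<in> S"
      then obtain y z where yz: "y \<in> T" "leX x y" "z \<in> U" "leX y z" "x \<in> X"
        using st S unfolding Mle_def Mset_def by blast
      have "y \<in> X" "z \<in> X" using yz T U unfolding Mset_def by auto
      hence "leX x z" using posetD(3)[OF PX] yz by blast
      thus "\<exists>z\<in>U. leX x z" using yz by blast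
    qed
  next
    fix S T assume S: "S \<in> Mset X leX" and T: "T \<in> Mset X leX"
      and st: "Mle leX S T \<and> Mle leX T S"
    have sub: "A \<subseteq> B" if A: "A \<in> Mset X leX" and B: "B \<in> Mset X leX"
      and ab: "Mle leX A B" "Mle leX B A" for A B
    proof
      fix x assume x: "x \<in> A"
      then obtain y x' where y: "y \<in> B" "leX x y" "x' \<in> A" "leX y x'"
        using ab unfolding Mle_def by blast
      have "x \<in> X" "y \<in> X" "x' \<in> X" using x y A B unfolding Mset_def by auto
      hence "leX x x'" using posetD(3)[OF PX] y by blast
      hence "x' = x" using A x y(3) unfolding Mset_def by blast
      hence "y = x" using posetD(2)[OF PX] y \<open>x \<in> X\<close> \<open>y \<in> X\<close> by metis
      thus "x \<in> B" using y by simp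
    qed
    show "S = T" using sub[OF S T] sub[OF T S] st by blast
  qed
  have img: "Mmax_map leY f S \<in> Mset Y leY" if S: "S \<in> Mset X leX" for S
  proof -
    have fin: "finite (f ` S)" "f ` S \<subseteq> Y" "f ` S \<noteq> {}" using S fY unfolding Mset_def by auto
    then obtain y where "y \<in> f ` S" by blast
    from exists_max[OF PY fin(1,2) this] have ne: "maxel leY (f ` S) \<noteq> {}" by blast
    show ?thesis unfolding Mset_def Mmax_map_def
      using ne fin maxel_sub[of leY "f ` S"] finite_subset[OF maxel_sub fin(1)]
      by (auto simp: maxel_def)
  qed
  show "mono_map (Mset X leX) (Mle leX) (Mset Y leY) (Mle leY) (Mmax_map leY f)"
    unfolding mono_map_def
  proof (intro conjI ballI impI)
    show "Mmax_map leY f ` Mset X leX \<subseteq> Mset Y leY" using img by blast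
  next
    fix S T assume "S \<in> Mset X leX" "T \<in> Mset X leX" "Mle leX S T"
    thus "Mle leY (Mmax_map leY f S) (Mmax_map leY f T)"
      using mono_part[where leX=leX and X=X and f=f and leY=leY and Y=Y] PY fY by blast
  qed
  show "\<forall>S\<in>Mset X leX. Mmax_map leX id S = S"
    unfolding Mset_def Mmax_map_def maxel_def by auto
  show "\<forall>S\<in>Mset X leX. Mmax_map leZ (g \<circ> f) S = Mmax_map leZ g (Mmax_map leY f S)"
  proof
    fix S assume S: "S \<in> Mset X leX"
    define A where "A = f ` S"
    define M where "M = maxel leY A"
    have fin: "finite A" "A \<subseteq> Y" using S fY unfolding A_def Mset_def by auto
    have MA: "M \<subseteq> A" unfolding M_def by (rule maxel_sub)
    have cov: "\<And>a. a \<in> A \<Longrightarrow> \<exists>m\<in>M. leY a m" using exists_max[OF PY fin] unfolding M_def by blast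
    have "maxel leZ (g ` A) = maxel leZ (g ` M)"
    proof (intro equalityI subsetI)
      fix z assume z: "z \<in> maxel leZ (g ` A)"
      then obtain a where a: "a \<in> A" "z = g a" unfolding maxel_def by blast
      then obtain m where m: "m \<in> M" "leY a m" using cov by blast
      have "leZ (g a) (g m)" using gZ m a fin MA by blast
      moreover have "g m \<in> g ` A" using m MA by blast
      moreover have "\<forall>y\<in>g ` A. leZ z y \<longrightarrow> y = z" using z unfolding maxel_def by blast
      ultimately have "g m = z" using a by blast
      thus "z \<in> maxel leZ (g ` M)" using z m MA unfolding maxel_def by blast
    next
      fix z assume z: "z \<in> maxel leZ (g ` M)"
      then obtain m0 where m0: "m0 \<in> M" "z = g m0" unfolding maxel_def by blast
      have "z \<in> g ` A" using m0 MA by blast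
      moreover have "w = z" if w: "w \<in> g ` A" "leZ z w" for w
      proof -
        obtain a where a: "a \<in> A" "w = g a" using w by blast
        then obtain m where m: "m \<in> M" "leY a m" using cov by blast
        have inZ: "g a \<in> Z" "g m \<in> Z" "z \<in> Z" using gZ a m m0 MA fin by auto
        have "leZ (g a) (g m)" using gZ m a fin MA by blast
        hence "leZ z (g m)" using posetD(3)[OF PZ] inZ w a by metis
        hence "g m = z" using z m unfolding maxel_def by blast
        hence "leZ w z" using \<open>leZ (g a) (g m)\<close> a by simp
        thus "w = z" using posetD(2)[OF PZ] inZ w a by metis
      qed
      ultimately show "z \<in> maxel leZ (g ` A)" unfolding maxel_def by blast
    qed
    thus "Mmax_map leZ (g \<circ> f) S = Mmax_map leZ g (Mmax_map leY f S)"
      unfolding Mmax_map_def A_def M_def by (simp add: image_comp)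
  qed
qed

end
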